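(* Let $G$ be a tricyclic graph with at least one pendant vertex whose base $\widetilde G$ consists of three cycles that pairwise have exactly one vertex $u$ in common (i.e. $\widetilde G$ is the union of three cycles sharing only the single vertex $u$). Then $G\notin\mathscr{G}_{a,b}$ for all integers $a,b$.
   Context: All graphs are simple and connected; $d_G(v)$ is the degree of $v$, $N_G(v)$ its neighbourhood. A tricyclic graph is a connected graph with $|E_G|=|V_G|+2$. For integers $a,b$, $\mathscr{G}_{a,b}$ is the set of connected graphs $G$ such that for every $v\in V_G$, $\sum_{u\in N_G(v)}d_G(u)=a\,d_G(v)+b-d_G(v)^2$ (equivalently, $G$ is connected and its signless Laplacian $D+A$ has exactly two main eigenvalues with parameters $a,b$). A pendant vertex is a vertex of degree $1$. The base $\widetilde{G}$ of $G$ is the subgraph obtained from $G$ by repeatedly deleting pendant vertices until none remain. *)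

theory Defs
  imports Main
begin

definition simple_graph :: "'a set \<Rightarrow> ('a \<Rightarrow> 'a \<Rightarrow> bool) \<Rightarrow> bool" where
  "simple_graph V E \<longleftrightarrow> finite V \<and> (\<forall>x y. E x y \<longrightarrow> E y x) \<and> (\<forall>x. \<not> E x x)
     \<and> (\<forall>x y. E x y \<longrightarrow> x \<in> V \<and> y \<in> V)"

definition edges :: "'a set \<Rightarrow> ('a \<Rightarrow> 'a \<Rightarrow> bool) \<Rightarrow> 'a set set" where
  "edges V E = {{x, y} | x y. x \<in> V \<and> y \<in> V \<and> E x y}"

definition connected_graph :: "'a set \<Rightarrow> ('a \<Rightarrow> 'a \<Rightarrow> bool) \<Rightarrow> bool" where
  "connected_graph V E \<longleftrightarrow> V \<noteq> {} \<and>
     (\<forall>x\<in>V. \<forall>y\<in>V. (\<lambda>a b. a \<in> V \<and> b \<in> V \<and> E a b)\<^sup>*\<^sup>* x y)"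

definition nbhd :: "'a set \<Rightarrow> ('a \<Rightarrow> 'a \<Rightarrow> bool) \<Rightarrow> 'a \<Rightarrow> 'a set" where
  "nbhd V E v = {u \<in> V. E v u}"

definition deg :: "'a set \<Rightarrow> ('a \<Rightarrow> 'a \<Rightarrow> bool) \<Rightarrow> 'a \<Rightarrow> nat" where
  "deg V E v = card (nbhd V E v)"

definition tricyclic :: "'a set \<Rightarrow> ('a \<Rightarrow> 'a \<Rightarrow> bool) \<Rightarrow> bool" where
  "tricyclic V E \<longleftrightarrow> simple_graph V E \<and> connected_graph V E \<and> card (edges V E) = card V + 2"

definition pendant :: "'a set \<Rightarrow> ('a \<Rightarrow> 'a \<Rightarrow> bool) \<Rightarrow> 'a \<Rightarrow> bool" where
  "pendant V E v \<longleftrightarrow> v \<in> V \<and> deg V E v = 1"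

definition in_Gab :: "'a set \<Rightarrow> ('a \<Rightarrow> 'a \<Rightarrow> bool) \<Rightarrow> int \<Rightarrow> int \<Rightarrow> bool" where
  "in_Gab V E a b \<longleftrightarrow> connected_graph V E \<and>
     (\<forall>v\<in>V. (\<Sum>u\<in>nbhd V E v. int (deg V E u))
              = a * int (deg V E v) + b - int (deg V E v) ^ 2)"

definition prune_step :: "('a \<Rightarrow> 'a \<Rightarrow> bool) \<Rightarrow> 'a set \<Rightarrow> 'a set \<Rightarrow> bool" where
  "prune_step E W W' \<longleftrightarrow> (\<exists>v. pendant W E v \<and> W' = W - {v})"

definition is_base :: "'a set \<Rightarrow> ('a \<Rightarrow> 'a \<Rightarrow> bool) \<Rightarrow> 'a set \<Rightarrow> bool" where
  "is_base V E W \<longleftrightarrow> (prune_step E)\<^sup>*\<^sup>* V W \<and> \<not> (\<exists>v. pendant W E v)"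

definition cycle_edges :: "'a list \<Rightarrow> 'a set set" where
  "cycle_edges c = {{c ! i, c ! ((i + 1) mod length c)} | i. i < length c}"

definition is_cycle_list :: "'a list \<Rightarrow> bool" where
  "is_cycle_list c \<longleftrightarrow> distinct c \<and> length c \<ge> 3"

end

theory Submission
  imports Defs
begin


lemma alg1:
  fixes a b k Z :: int
  assumes "a + b - 1 = k" "b \<le> -1" "k \<ge> 2" "Z + (k-1) = a*k + b - k^2"
  shows "a*Z + b - Z^2 \<le> Z + k - 1"
proof -
  have a: "a = k + 1 - b" using assms(1) by simp
  have Z: "Z = a*k + b - k^2 - k + 1" using assms(4) by simp
  have eq: "a*Z + b - Z^2 - (Z + k - 1) = (-b)*(k-1)*(k-2)*(1+b)"
    unfolding Z a by (simp add: algebra_simps power2_eq_square)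
  have "(-b)*(k-1)*(k-2) \<ge> 0" using assms by (intro mult_nonneg_nonneg) auto
  moreover have "1 + b \<le> 0" using assms by simp
  ultimately have "(-b)*(k-1)*(k-2)*(1+b) \<le> 0" by (rule mult_nonneg_nonpos)
  then show ?thesis using eq by simp
qed

lemma final_arith:
  fixes a b k U A n2 nk :: int
  assumes ab: "a + b - 1 = k" and bneg: "b \<le> -1" and k3: "k \<ge> 3"
  and U: "U = 6 \<or> (U = k \<and> k \<ge> 7)"
  and A0: "0 \<le> A" and A6: "A \<le> 6"
  and us: "2*A + k*(6-A) = a*U + b - U^2 - U + 6"
  and h2: "A > 0 \<Longrightarrow> \<exists>d. (d = 2 \<or> d = k) \<and> U + d = a*2 + b - 4 - 2 + 2"
  and hk: "A < 6 \<Longrightarrow> \<exists>d. (d = 2 \<or> d = k) \<and> U + d = a*k + b - k^2 - k + 2"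
  and n: "n2 \<ge> 0" "nk \<ge> 0"
  and gl: "n2*(a*2 + b - 4 - 2 + 2 - 2*2) + nk*(a*k + b - k^2 - k + 2 - 2*k) + (a*U + b - U^2 - U + 6 - 6*U) = 0"
  shows False
proof -
  define \<beta> where "\<beta> = -b"
  have be: "\<beta> \<ge> 1" "b = -\<beta>" using bneg by (auto simp: \<beta>_def)
  have a: "a = k + 1 + \<beta>" using ab be by simp
  have Rk: "a*k + b - k^2 - k + 2 = \<beta>*(k-1) + 2" unfolding a be(2) by (simp add: algebra_simps power2_eq_square)
  have R2: "a*2 + b - 4 - 2 + 2 = 2*k - 2 + \<beta>" unfolding a be(2) by simp
  have Acs: "A = 0 \<or> A = 1 \<or> A = 2 \<or> A = 3 \<or> A = 4 \<or> A = 5 \<or> A = 6" using A0 A6 by arith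
  show False
  proof (cases "U = 6")
    case U6: True
    have us6: "2*A + k*(6-A) = 6*k + 5*\<beta> - 30" using us unfolding U6 a be(2) by simp
    show False
    proof -
      { assume "A = 0"
        then have "\<beta> = 6" using us6 by simp
        then obtain d where "d = 2 \<or> d = k" "6 + d = 6*(k-1) + 2" using hk Rk U6 \<open>A = 0\<close> by auto
        then have False using k3 by auto }
      moreover
      { assume "A = 6"
        then have "6*k + 5*\<beta> = 42" using us6 by simp
        then obtain d where "d = 2 \<or> d = k" "6 + d = 2*k - 2 + \<beta>" using h2 R2 U6 \<open>A = 6\<close> by auto
        then have False using k3 \<open>6*k + 5*\<beta> = 42\<close> by auto }
      moreover
      { assume A: "A = 1 \<or> A = 2 \<or> A = 3 \<or> A = 4"
        then obtain d where "d = 2 \<or> d = k" "6 + d = 2*k - 2 + \<beta>" using h2 R2 U6 by fastforce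
        then have False using k3 A us6 by auto }
      moreover
      { assume A: "A = 5"
        then have kb: "k + \<beta> = 8" using us6 by simp
        obtain d where d: "d = 2 \<or> d = k" "6 + d = \<beta>*(k-1) + 2" using hk Rk U6 A by auto
        have "k = 3 \<or> k = 4 \<or> k = 5 \<or> k = 6 \<or> k = 7" using kb k3 be by arith
        then have False
        proof (elim disjE)
          assume "k = 3" then show False using kb d by auto
        next
          assume "k = 4" then show False using kb d by auto
        next
          assume "k = 5" then show False using kb d by auto
        next
          assume k6: "k = 6"
          then have "\<beta> = 2" using kb by simp
          then have "n2*8 - 20 = 0" using gl k6 U6 unfolding a be(2) by simp
          then show False by presburger
        next
          assume k7: "k = 7"
          then have "\<beta> = 1" using kb by simp
          then have "n2*9 - nk*6 - 19 = 0" using gl k7 U6 unfolding a be(2) by simp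
          then show False by presburger
        qed }
      ultimately show False using Acs by blast
    qed
  next
    case False
    then have Uk: "U = k" and k7: "k \<ge> 7" using U by auto
    have b2: "\<beta> = 2"
    proof -
      have c: "A > 0 \<or> A < 6" by arith
      show ?thesis
      proof (cases "A > 0")
        case True
        then obtain d where "d = 2 \<or> d = k" "k + d = 2*k - 2 + \<beta>" using h2 R2 Uk by auto
        then show ?thesis using k7 be by auto
      next
        case False
        then obtain d where d: "d = 2 \<or> d = k" "k + d = \<beta>*(k-1) + 2" using hk Rk Uk by auto
        have "\<beta> = 1 \<or> \<beta> = 2 \<or> \<beta> \<ge> 3" using be by arith
        then show ?thesis
        proof (elim disjE)
          assume "\<beta> = 1" then show ?thesis using d k7 by auto
        next
          assume "\<beta> \<ge> 3"
          then have "\<beta>*(k-1) \<ge> 3*(k-1)" using k7 by (intro mult_right_mono) auto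
          then show ?thesis using d k7 by auto
        qed
      qed
    qed
    have "2*A + k*(6-A) = 2*k + 4" using us unfolding Uk a be(2) b2 by (simp add: algebra_simps power2_eq_square)
    then show False using Acs k7 by auto
  qed
qed



lemma sum_split2:
  fixes f :: "'a \<Rightarrow> int" and g :: "int \<Rightarrow> int"
  assumes fin: "finite X" and v: "\<forall>v\<in>X. f v = p \<or> f v = q"
  shows "(\<Sum>v\<in>X. g (f v)) = g p * int (card {v\<in>X. f v = p}) + g q * int (card {v\<in>X. f v \<noteq> p})"
proof -
  have X: "X = {v\<in>X. f v = p} \<union> {v\<in>X. f v \<noteq> p}" by auto
  have "(\<Sum>v\<in>X. g (f v)) = (\<Sum>v\<in>{v\<in>X. f v = p}. g (f v)) + (\<Sum>v\<in>{v\<in>X. f v \<noteq> p}. g (f v))"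
  proof -
    have "(\<Sum>v\<in>X. g (f v)) = (\<Sum>v\<in>X \<inter> {v. f v = p}. g (f v)) + (\<Sum>v\<in>X - {v. f v = p}. g (f v))"
      using fin by (rule sum.Int_Diff)
    moreover have "X \<inter> {v. f v = p} = {v\<in>X. f v = p}" "X - {v. f v = p} = {v\<in>X. f v \<noteq> p}" by auto
    ultimately show ?thesis by simp
  qed
  also have "(\<Sum>v\<in>{v\<in>X. f v = p}. g (f v)) = (\<Sum>v\<in>{v\<in>X. f v = p}. g p)" by (rule sum.cong) auto
  also have "(\<Sum>v\<in>{v\<in>X. f v \<noteq> p}. g (f v)) = (\<Sum>v\<in>{v\<in>X. f v \<noteq> p}. g q)"
    using v by (intro sum.cong) auto
  finally show ?thesis by (simp add: mult.commute)
qed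

lemma card_split2:
  assumes "finite X"
  shows "card {v\<in>X. P v} + card {v\<in>X. \<not> P v} = card X"
proof -
  have X: "X = {v\<in>X. P v} \<union> {v\<in>X. \<not> P v}" by auto
  have "card X = card ({v\<in>X. P v} \<union> {v\<in>X. \<not> P v})" by (subst X) simp
  also have "\<dots> = card {v\<in>X. P v} + card {v\<in>X. \<not> P v}" using assms by (intro card_Un_disjoint) auto
  finally show ?thesis by simp
qed

lemma dbl_count:
  fixes g :: "'a \<Rightarrow> int"
  assumes fin: "finite W" and sym: "\<forall>x y. E x y \<longrightarrow> E y x"
  shows "(\<Sum>w\<in>W. \<Sum>x\<in>{x\<in>W. E w x}. g x) = (\<Sum>x\<in>W. int (card {w\<in>W. E x w}) * g x)"
proof -
  have "(\<Sum>w\<in>W. \<Sum>x\<in>{x\<in>W. E w x}. g x) = (\<Sum>w\<in>W. \<Sum>x\<in>W. if E w x then g x else 0)"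
    using fin by (simp add: sum.inter_filter)
  also have "\<dots> = (\<Sum>x\<in>W. \<Sum>w\<in>W. if E w x then g x else 0)" by (rule sum.swap)
  also have "\<dots> = (\<Sum>x\<in>W. \<Sum>w\<in>{w\<in>W. E x w}. g x)"
  proof (rule sum.cong[OF refl])
    fix x assume "x \<in> W"
    have "(\<Sum>w\<in>W. if E w x then g x else 0) = (\<Sum>w\<in>W. if E x w then g x else 0)"
      using sym by (intro sum.cong) auto
    moreover have "(\<Sum>w\<in>{w\<in>W. E x w}. g x) = (\<Sum>w\<in>W. if E x w then g x else 0)"
      using fin by (rule sum.inter_filter)
    ultimately show "(\<Sum>w\<in>W. if E w x then g x else 0) = (\<Sum>w\<in>{w\<in>W. E x w}. g x)" by simp
  qed
  also have "\<dots> = (\<Sum>x\<in>W. int (card {w\<in>W. E x w}) * g x)" by simp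
  finally show ?thesis .
qed



lemma idx_facts:
  fixes i L :: nat
  assumes "i < L" "3 \<le> L"
  shows "(i+1) mod L \<noteq> (i+L-1) mod L" "(i+1) mod L \<noteq> i" "(i+L-1) mod L \<noteq> i"
    "((i+L-1) mod L + 1) mod L = i" "(i+1) mod L < L" "(i+L-1) mod L < L"
proof -
  have m: "(i+L-1) mod L = (if i = 0 then L - 1 else i - 1)"
  proof (cases "i = 0")
    case True then show ?thesis using assms by simp
  next
    case False
    then have eq: "i + L - 1 = (i - 1) + L" by simp
    have "(i + L - 1) mod L = (i - 1) mod L" by (metis eq mod_add_self2)
    then show ?thesis using False assms by simp
  qed
  have p: "(i+1) mod L = (if i + 1 = L then 0 else i + 1)"
    using assms by (auto simp: mod_if)
  show "(i+1) mod L \<noteq> (i+L-1) mod L" "(i+1) mod L \<noteq> i" "(i+L-1) mod L \<noteq> i"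
    "(i+1) mod L < L" "(i+L-1) mod L < L"
    using assms unfolding m p by auto
  show "((i+L-1) mod L + 1) mod L = i" unfolding m using assms by (auto simp: mod_if)
qed

lemma idx_back:
  fixes i j L :: nat
  assumes "j < L" "(j+1) mod L = i" "3 \<le> L"
  shows "j = (i+L-1) mod L"
proof (cases "j + 1 < L")
  case True
  then have "i = j + 1" using assms by simp
  then have "i + L - 1 = j + L" by simp
  then show ?thesis using assms by simp
next
  case False
  then have "j + 1 = L" using assms by simp
  then have "i = 0" using assms by simp
  then show ?thesis using \<open>j+1 = L\<close> by simp
qed

lemma cyc_nb_eq:
  assumes c: "is_cycle_list c" and i: "i < length c"
  shows "{x. {c!i, x} \<in> cycle_edges c} = {c!((i+1) mod length c), c!((i+length c-1) mod length c)}"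
proof -
  let ?L = "length c"
  have L3: "3 \<le> ?L" and dist: "distinct c" using c by (auto simp: is_cycle_list_def)
  note F = idx_facts[OF i L3]
  show ?thesis
  proof (intro set_eqI iffI)
    fix x assume "x \<in> {x. {c!i, x} \<in> cycle_edges c}"
    then obtain j where j: "j < ?L" "{c!i, x} = {c!j, c!((j+1) mod ?L)}"
      by (auto simp: cycle_edges_def)
    have jL: "(j+1) mod ?L < ?L" using L3 by (intro mod_less_divisor) (cases c, auto)
    from j(2) consider "c!i = c!j \<and> x = c!((j+1) mod ?L)" | "c!i = c!((j+1) mod ?L) \<and> x = c!j"
      by (auto simp: doubleton_eq_iff)
    then show "x \<in> {c!((i+1) mod ?L), c!((i+?L-1) mod ?L)}"
    proof cases
      case 1
      then have "i = j" using dist i j(1) by (simp add: nth_eq_iff_index_eq)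
      then show ?thesis using 1 by simp
    next
      case 2
      then have "i = (j+1) mod ?L" using dist i jL by (simp add: nth_eq_iff_index_eq)
      then have "j = (i+?L-1) mod ?L" using idx_back[OF j(1) _ L3] by simp
      then show ?thesis using 2 by simp
    qed
  next
    fix x assume "x \<in> {c!((i+1) mod ?L), c!((i+?L-1) mod ?L)}"
    then consider "x = c!((i+1) mod ?L)" | "x = c!((i+?L-1) mod ?L)" by auto
    then show "x \<in> {x. {c!i, x} \<in> cycle_edges c}"
    proof cases
      case 1 then show ?thesis using i by (auto simp: cycle_edges_def)
    next
      case 2
      have "{c!i, x} = {c!((i+?L-1) mod ?L), c!(((i+?L-1) mod ?L + 1) mod ?L)}"
        using 2 F(4) by (simp add: insert_commute)
      then show ?thesis using F(6) unfolding cycle_edges_def by blast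
    qed
  qed
qed

lemma cyc_nb:
  assumes c: "is_cycle_list c" and w: "w \<in> set c"
  shows "card {x. {w, x} \<in> cycle_edges c} = 2" "{x. {w, x} \<in> cycle_edges c} \<subseteq> set c - {w}"
proof -
  obtain i where i: "i < length c" "c!i = w" using w by (auto simp: in_set_conv_nth)
  have L3: "3 \<le> length c" and dist: "distinct c" using c by (auto simp: is_cycle_list_def)
  note F = idx_facts[OF i(1) L3]
  note E = cyc_nb_eq[OF c i(1)]
  have ne: "c!((i+1) mod length c) \<noteq> c!((i+length c-1) mod length c)"
    using F dist by (simp add: nth_eq_iff_index_eq)
  show "card {x. {w, x} \<in> cycle_edges c} = 2" using E ne i(2) by simp
  have "c!((i+1) mod length c) \<noteq> w" "c!((i+length c-1) mod length c) \<noteq> w"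
    using F dist i by (auto simp: nth_eq_iff_index_eq)
  then show "{x. {w, x} \<in> cycle_edges c} \<subseteq> set c - {w}" using E i(2) F(5,6) by auto
qed

lemma cyc_nb_out:
  assumes "w \<notin> set c"
  shows "{x. {w, x} \<in> cycle_edges c} = {}"
proof -
  { fix x j assume "j < length c" "{w, x} = {c!j, c!((j+1) mod length c)}"
    moreover have "(j+1) mod length c < length c" using \<open>j < length c\<close> by (intro mod_less_divisor) (cases c, auto)
    ultimately have "w \<in> set c" by (auto simp: doubleton_eq_iff)
  }
  then show ?thesis using assms by (auto simp: cycle_edges_def)
qed



lemma prune_struct:
  assumes "(prune_step E)\<^sup>*\<^sup>* A B" and irr: "\<forall>x. \<not> E x x" and sym: "\<forall>x y. E x y \<longrightarrow> E y x"
  shows "B \<subseteq> A \<and> (\<exists>par rk. \<forall>x\<in>A-B. par x \<in> A \<and> E x (par x)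
           \<and> (par x \<in> A - B \<longrightarrow> rk x < (rk (par x) :: nat))
           \<and> (\<forall>y\<in>A. E x y \<longrightarrow> y = par x \<or> (y \<in> A - B \<and> par y = x)))"
  using assms(1)
proof (induction rule: converse_rtranclp_induct)
  case base
  then show ?case by auto
next
  case (step A A')
  from step.hyps(1) obtain v where pv: "pendant A E v" and A': "A' = A - {v}"
    by (auto simp: prune_step_def)
  have vA: "v \<in> A" and c1: "card (nbhd A E v) = 1" using pv by (auto simp: pendant_def deg_def)
  then obtain p where np: "nbhd A E v = {p}" by (auto simp: card_Suc_eq)
  have pA: "p \<in> A" and Evp: "E v p" using np by (auto simp: nbhd_def)
  have pv': "p \<noteq> v" using Evp irr by auto
  have uniq: "\<And>y. y \<in> A \<Longrightarrow> E v y \<Longrightarrow> y = p" using np by (auto simp: nbhd_def)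
  from step.IH obtain par rk where BA: "B \<subseteq> A'" and
    P: "\<forall>x\<in>A'-B. par x \<in> A' \<and> E x (par x)
           \<and> (par x \<in> A' - B \<longrightarrow> rk x < (rk (par x) :: nat))
           \<and> (\<forall>y\<in>A'. E x y \<longrightarrow> y = par x \<or> (y \<in> A' - B \<and> par y = x))" by blast
  have vB: "v \<notin> B" using BA A' by auto
  define par' where "par' = par(v := p)"
  define rk' where "rk' = (\<lambda>x. if x = v then 0 else Suc (rk x))"
  have "\<forall>x\<in>A-B. par' x \<in> A \<and> E x (par' x)
           \<and> (par' x \<in> A - B \<longrightarrow> rk' x < rk' (par' x))
           \<and> (\<forall>y\<in>A. E x y \<longrightarrow> y = par' x \<or> (y \<in> A - B \<and> par' y = x))"
  proof
    fix x assume x: "x \<in> A - B"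
    show "par' x \<in> A \<and> E x (par' x)
           \<and> (par' x \<in> A - B \<longrightarrow> rk' x < rk' (par' x))
           \<and> (\<forall>y\<in>A. E x y \<longrightarrow> y = par' x \<or> (y \<in> A - B \<and> par' y = x))"
    proof (cases "x = v")
      case True
      have a1: "par' x = p" "rk' x = 0" "rk' p = Suc (rk p)" using True pv' by (simp_all add: par'_def rk'_def)
      show ?thesis unfolding a1 using pA Evp uniq True by blast
    next
      case False
      then have xA': "x \<in> A' - B" using x A' by auto
      have px: "par x \<in> A'" "E x (par x)" using P xA' by auto
      have pxv: "par x \<noteq> v" using px A' by auto
      have r: "par x \<in> A' - B \<longrightarrow> rk x < rk (par x)" using P xA' by auto
      have nb: "\<forall>y\<in>A'. E x y \<longrightarrow> y = par x \<or> (y \<in> A' - B \<and> par y = x)" using P xA' by auto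
      show ?thesis
      proof (intro conjI)
        show "par' x \<in> A" using px A' False by (auto simp: par'_def)
        show "E x (par' x)" using px False by (auto simp: par'_def)
        show "par' x \<in> A - B \<longrightarrow> rk' x < rk' (par' x)" using r False pxv A'
          by (auto simp: par'_def rk'_def)
        show "\<forall>y\<in>A. E x y \<longrightarrow> y = par' x \<or> (y \<in> A - B \<and> par' y = x)"
        proof (intro ballI impI)
          fix y assume yA: "y \<in> A" and Exy: "E x y"
          show "y = par' x \<or> (y \<in> A - B \<and> par' y = x)"
          proof (cases "y = v")
            case True
            then have "x = p" using uniq sym Exy x by auto
            then show ?thesis using True vA vB by (auto simp: par'_def)
          next
            case False
            then have "y \<in> A'" using yA A' by auto
            then show ?thesis using nb Exy False \<open>x \<noteq> v\<close> A' by (auto simp: par'_def)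
          qed
        qed
      qed
    qed
  qed
  then show ?case using BA A' by blast
qed



theorem proposition2:
  fixes V :: "'a set" and E :: "'a \<Rightarrow> 'a \<Rightarrow> bool" and W :: "'a set"
    and u :: 'a and c1 c2 c3 :: "'a list"
  assumes "tricyclic V E"
    and "\<exists>v. pendant V E v"
    and "is_base V E W"
    and "is_cycle_list c1" and "is_cycle_list c2" and "is_cycle_list c3"
    and "set c1 \<inter> set c2 = {u}" and "set c1 \<inter> set c3 = {u}" and "set c2 \<inter> set c3 = {u}"
    and "W = set c1 \<union> set c2 \<union> set c3"
    and "edges W E = cycle_edges c1 \<union> cycle_edges c2 \<union> cycle_edges c3"
  shows "\<forall>a b. \<not> in_Gab V E a b"
proof (intro allI notI)
  fix a b assume gab: "in_Gab V E a b"
  have finV: "finite V" and sym: "\<forall>x y. E x y \<longrightarrow> E y x" and irr: "\<forall>x. \<not> E x x"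
    and EV: "\<forall>x y. E x y \<longrightarrow> x \<in> V \<and> y \<in> V"
    using assms(1) by (auto simp: tricyclic_def simple_graph_def)
  have pr: "(prune_step E)\<^sup>*\<^sup>* V W" using assms(3) by (simp add: is_base_def)
  obtain par rk where WV: "W \<subseteq> V" and
    P: "\<forall>x\<in>V-W. par x \<in> V \<and> E x (par x)
           \<and> (par x \<in> V - W \<longrightarrow> rk x < (rk (par x) :: nat))
           \<and> (\<forall>y\<in>V. E x y \<longrightarrow> y = par x \<or> (y \<in> V - W \<and> par y = x))"
    using prune_struct[OF pr irr sym] by blast
  define nb where "nb = nbhd V E"
  define dg where "dg = deg V E"
  define ch where "ch = (\<lambda>x. {y \<in> V - W. par y = x})"
  define NW where "NW = (\<lambda>w. {x \<in> W. E w x})"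
  define S where "S = (\<lambda>v. \<Sum>y\<in>nb v. int (dg y))"
  have dg_def': "\<And>v. dg v = card (nb v)" by (simp add: dg_def nb_def deg_def)
  have Gab: "\<And>v. v \<in> V \<Longrightarrow> S v = a * int (dg v) + b - int (dg v) ^ 2"
    using gab by (simp add: in_Gab_def S_def nb_def dg_def)
  have nb_sub: "\<And>v. nb v \<subseteq> V" by (auto simp: nb_def nbhd_def)
  have fin_nb: "\<And>v. finite (nb v)" using finV nb_sub by (meson finite_subset)
  have ch_sub: "\<And>x. ch x \<subseteq> V - W" by (auto simp: ch_def)
  have fin_ch: "\<And>x. finite (ch x)" using finV ch_sub by (meson finite_Diff finite_subset)
  have NW_sub: "\<And>w. NW w \<subseteq> W" by (auto simp: NW_def)
  have fin_NW: "\<And>w. finite (NW w)" using finV WV NW_sub by (meson finite_subset)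
  have uW: "u \<in> W" using assms(7,10) by auto
  have NWeq: "\<And>w. w \<in> W \<Longrightarrow> NW w = {x. {w,x} \<in> cycle_edges c1} \<union> {x. {w,x} \<in> cycle_edges c2} \<union> {x. {w,x} \<in> cycle_edges c3}"
  proof -
    fix w assume wW: "w \<in> W"
    have "\<And>x. (x \<in> W \<and> E w x) \<longleftrightarrow> {w,x} \<in> edges W E"
    proof
      fix x assume "x \<in> W \<and> E w x" then show "{w,x} \<in> edges W E" using wW by (auto simp: edges_def)
    next
      fix x assume "{w,x} \<in> edges W E"
      then obtain p q where pq: "{w,x} = {p,q}" "p \<in> W" "q \<in> W" "E p q" by (auto simp: edges_def)
      then show "x \<in> W \<and> E w x" using sym by (auto simp: doubleton_eq_iff)
    qed
    then show "NW w = {x. {w,x} \<in> cycle_edges c1} \<union> {x. {w,x} \<in> cycle_edges c2} \<union> {x. {w,x} \<in> cycle_edges c3}"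
      using assms(11) by (auto simp: NW_def)
  qed
  have cardNW: "\<And>w. w \<in> W \<Longrightarrow> card (NW w) = (if w = u then 6 else 2)"
  proof -
    fix w assume wW: "w \<in> W"
    show "card (NW w) = (if w = u then 6 else 2)"
    proof (cases "w = u")
      case True
      have u1: "u \<in> set c1" "u \<in> set c2" "u \<in> set c3" using assms(7,8) by auto
      note n1 = cyc_nb[OF assms(4) u1(1)] and n2 = cyc_nb[OF assms(5) u1(2)] and n3 = cyc_nb[OF assms(6) u1(3)]
      have d12: "{x. {u,x} \<in> cycle_edges c1} \<inter> {x. {u,x} \<in> cycle_edges c2} = {}"
        using n1(2) n2(2) assms(7) by blast
      have d3: "({x. {u,x} \<in> cycle_edges c1} \<union> {x. {u,x} \<in> cycle_edges c2}) \<inter> {x. {u,x} \<in> cycle_edges c3} = {}"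
        using n1(2) n2(2) n3(2) assms(8,9) by blast
      have f: "finite {x. {u,x} \<in> cycle_edges c1}" "finite {x. {u,x} \<in> cycle_edges c2}" "finite {x. {u,x} \<in> cycle_edges c3}"
        using n1(1) n2(1) n3(1) by (auto intro: card_ge_0_finite)
      have "card (NW u) = 6" unfolding NWeq[OF uW]
        using card_Un_disjoint[OF _ _ d3] card_Un_disjoint[OF f(1,2) d12] f n1(1) n2(1) n3(1) by simp
      then show ?thesis using True by simp
    next
      case False
      have "w \<in> set c1 \<or> w \<in> set c2 \<or> w \<in> set c3" using wW assms(10) by auto
      then have "card (NW w) = 2"
      proof (elim disjE)
        assume h: "w \<in> set c1"
        then have "w \<notin> set c2" "w \<notin> set c3" using assms(7,8) False by auto
        then have "{x. {w,x} \<in> cycle_edges c2} = {}" "{x. {w,x} \<in> cycle_edges c3} = {}" by (simp_all add: cyc_nb_out)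
        then show ?thesis unfolding NWeq[OF wW] using cyc_nb(1)[OF assms(4) h] by simp
      next
        assume h: "w \<in> set c2"
        then have "w \<notin> set c1" "w \<notin> set c3" using assms(7,9) False by auto
        then have "{x. {w,x} \<in> cycle_edges c1} = {}" "{x. {w,x} \<in> cycle_edges c3} = {}" by (simp_all add: cyc_nb_out)
        then show ?thesis unfolding NWeq[OF wW] using cyc_nb(1)[OF assms(5) h] by simp
      next
        assume h: "w \<in> set c3"
        then have "w \<notin> set c1" "w \<notin> set c2" using assms(8,9) False by auto
        then have "{x. {w,x} \<in> cycle_edges c1} = {}" "{x. {w,x} \<in> cycle_edges c2} = {}" by (simp_all add: cyc_nb_out)
        then show ?thesis unfolding NWeq[OF wW] using cyc_nb(1)[OF assms(6) h] by simp
      qed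
      then show ?thesis using False by simp
    qed
  qed
  have NWsym: "\<And>w x. x \<in> NW w \<Longrightarrow> w \<in> W \<Longrightarrow> w \<in> NW x" using sym by (auto simp: NW_def)
  have Pv: "\<And>x. x \<in> V - W \<Longrightarrow> par x \<in> V \<and> E x (par x)" using P by blast
  have Pnb: "\<And>x y. x \<in> V - W \<Longrightarrow> y \<in> V \<Longrightarrow> E x y \<Longrightarrow> y = par x \<or> (y \<in> V - W \<and> par y = x)"
    using P by blast
  have Prk: "\<And>x. x \<in> V - W \<Longrightarrow> par x \<in> V - W \<Longrightarrow> rk x < rk (par x)" using P by blast
  have nbV: "\<And>x. x \<in> V - W \<Longrightarrow> nb x = insert (par x) (ch x) \<and> par x \<notin> ch x"
  proof -
    fix x assume x: "x \<in> V - W"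
    have "nb x = insert (par x) (ch x)"
    proof (intro set_eqI iffI)
      fix y assume "y \<in> nb x"
      then have "y \<in> V" "E x y" by (auto simp: nb_def nbhd_def)
      then show "y \<in> insert (par x) (ch x)" using Pnb[OF x] by (auto simp: ch_def)
    next
      fix y assume "y \<in> insert (par x) (ch x)"
      then show "y \<in> nb x" using Pv[OF x] Pv sym by (auto simp: nb_def nbhd_def ch_def)
    qed
    moreover have "par x \<notin> ch x"
    proof
      assume h: "par x \<in> ch x"
      then have "par x \<in> V - W" "par (par x) = x" by (auto simp: ch_def)
      then have "rk x < rk (par x)" "rk (par x) < rk x" using Prk x by force+
      then show False by simp
    qed
    ultimately show "nb x = insert (par x) (ch x) \<and> par x \<notin> ch x" by blast
  qed
  have nbW: "\<And>w. w \<in> W \<Longrightarrow> nb w = NW w \<union> ch w"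
  proof -
    fix w assume w: "w \<in> W"
    show "nb w = NW w \<union> ch w"
    proof (intro set_eqI iffI)
      fix y assume "y \<in> nb w"
      then have y: "y \<in> V" "E w y" by (auto simp: nb_def nbhd_def)
      show "y \<in> NW w \<union> ch w"
      proof (cases "y \<in> W")
        case True then show ?thesis using y by (auto simp: NW_def)
      next
        case False
        then have "y \<in> V - W" using y by simp
        then have "w = par y" using Pnb[of y w] sym y w WV by auto
        then show ?thesis using \<open>y \<in> V - W\<close> by (auto simp: ch_def)
      qed
    next
      fix y assume "y \<in> NW w \<union> ch w"
      then show "y \<in> nb w" using Pv sym WV by (auto simp: nb_def nbhd_def ch_def NW_def)
    qed
  qed
  have NWch: "\<And>w. NW w \<inter> ch w = {}" using NW_sub ch_sub by blast
  have dgV: "\<And>x. x \<in> V - W \<Longrightarrow> dg x = Suc (card (ch x))"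
    using nbV fin_ch by (simp add: dg_def')
  have dgW: "\<And>w. w \<in> W \<Longrightarrow> dg w = card (NW w) + card (ch w)"
    using nbW NWch fin_ch fin_NW by (simp add: dg_def' card_Un_disjoint)
  have SV: "\<And>x. x \<in> V - W \<Longrightarrow> S x = int (dg (par x)) + (\<Sum>y\<in>ch x. int (dg y))"
    using nbV fin_ch by (simp add: S_def)
  have SW: "\<And>w. w \<in> W \<Longrightarrow> S w = (\<Sum>y\<in>NW w. int (dg y)) + (\<Sum>y\<in>ch w. int (dg y))"
    using nbW NWch fin_ch fin_NW by (simp add: S_def sum.union_disjoint)
  have NW2: "\<And>w. w \<in> W \<Longrightarrow> card (NW w) \<ge> 2" using cardNW by simp
  have dg2W: "\<And>w. w \<in> W \<Longrightarrow> dg w \<ge> 2" using dgW NW2 by fastforce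
  have dg1: "\<And>x. x \<in> V - W \<Longrightarrow> dg x \<ge> 1" using dgV by simp
  have inch: "\<And>x. x \<in> V - W \<Longrightarrow> x \<in> ch (par x)" by (simp add: ch_def)
  have dgpar: "\<And>x. x \<in> V - W \<Longrightarrow> dg (par x) \<ge> 2"
  proof -
    fix x assume x: "x \<in> V - W"
    show "dg (par x) \<ge> 2"
    proof (cases "par x \<in> W")
      case True then show ?thesis using dg2W by simp
    next
      case False
      then have "par x \<in> V - W" using Pv x by simp
      moreover have "card (ch (par x)) > 0" using inch[OF x] fin_ch[of "par x"]
        by (auto simp: card_gt_0_iff)
      ultimately show ?thesis using dgV by simp
    qed
  qed
  have leaf: "\<And>x. x \<in> V - W \<Longrightarrow> ch x = {} \<Longrightarrow> int (dg (par x)) = a + b - 1"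
  proof -
    fix x assume x: "x \<in> V - W" and c: "ch x = {}"
    have "dg x = 1" using dgV[OF x] c by simp
    moreover have "S x = int (dg (par x))" using SV[OF x] c by simp
    ultimately show "int (dg (par x)) = a + b - 1" using Gab[of x] x by simp
  qed
  have outer: "\<And>z. z \<in> V \<Longrightarrow> \<exists>Ou. finite Ou \<and> Ou \<inter> ch z = {} \<and> card Ou \<ge> 1 \<and> (\<forall>q\<in>Ou. dg q \<ge> 2)
      \<and> S z = (\<Sum>y\<in>Ou. int (dg y)) + (\<Sum>y\<in>ch z. int (dg y)) \<and> dg z = card Ou + card (ch z)"
  proof -
    fix z assume z: "z \<in> V"
    show "?thesis z"
    proof (cases "z \<in> W")
      case True
      have "finite (NW z)" "NW z \<inter> ch z = {}" "card (NW z) \<ge> 1" "\<forall>q\<in>NW z. dg q \<ge> 2"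
        "S z = (\<Sum>y\<in>NW z. int (dg y)) + (\<Sum>y\<in>ch z. int (dg y))" "dg z = card (NW z) + card (ch z)"
        using fin_NW[of z] NWch[of z] NW2[OF True] dg2W NW_sub[of z] SW[OF True] dgW[OF True] by auto
      then show ?thesis by blast
    next
      case False
      then have zz: "z \<in> V - W" using z by simp
      have "finite {par z}" "{par z} \<inter> ch z = {}" "card {par z} \<ge> 1" "\<forall>q\<in>{par z}. dg q \<ge> 2"
        "S z = (\<Sum>y\<in>{par z}. int (dg y)) + (\<Sum>y\<in>ch z. int (dg y))" "dg z = card {par z} + card (ch z)"
        using nbV[OF zz] dgpar[OF zz] SV[OF zz] dgV[OF zz] by auto
      then show ?thesis by blast
    qed
  qed
  obtain p0 where p0: "p0 \<in> V" "dg p0 = 1" using assms(2) by (auto simp: pendant_def dg_def)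
  have p0W: "p0 \<in> V - W" using p0 dg2W by force
  have chp0: "ch p0 = {}" using dgV[OF p0W] p0(2) fin_ch[of p0] by simp
  define y0 where "y0 = par p0"
  define k where "k = int (dg y0)"
  have hk: "k = a + b - 1" using leaf[OF p0W chp0] by (simp add: k_def y0_def)
  have k2: "k \<ge> 2" using dgpar[OF p0W] by (simp add: k_def y0_def)
  have y0V: "y0 \<in> V" using Pv[OF p0W] by (simp add: y0_def)
  have chsum: "\<And>x. (\<Sum>y\<in>ch x. int (dg y)) \<ge> int (card (ch x))"
  proof -
    fix x
    have "(\<Sum>y\<in>ch x. int (dg y)) \<ge> (\<Sum>y\<in>ch x. 1)"
      using dg1 ch_sub by (intro sum_mono) force
    then show "(\<Sum>y\<in>ch x. int (dg y)) \<ge> int (card (ch x))" by simp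
  qed
  have Osum: "\<And>Ou. finite Ou \<Longrightarrow> \<forall>q\<in>Ou. dg q \<ge> 2 \<Longrightarrow> (\<Sum>y\<in>Ou. int (dg y)) \<ge> 2 * int (card Ou)"
  proof -
    fix Ou :: "'a set" assume "finite Ou" "\<forall>q\<in>Ou. dg q \<ge> 2"
    then have "(\<Sum>y\<in>Ou. int (dg y)) \<ge> (\<Sum>y\<in>Ou. 2)" by (intro sum_mono) auto
    then show "(\<Sum>y\<in>Ou. int (dg y)) \<ge> 2 * int (card Ou)" by simp
  qed
  have bneg: "b \<le> -1"
  proof -
    obtain Ou where O: "finite Ou" "card Ou \<ge> 1" "\<forall>q\<in>Ou. dg q \<ge> 2"
      "S y0 = (\<Sum>y\<in>Ou. int (dg y)) + (\<Sum>y\<in>ch y0. int (dg y))" "dg y0 = card Ou + card (ch y0)"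
      using outer[OF y0V] by blast
    have "S y0 \<ge> 2 * int (card Ou) + int (card (ch y0))" using O(4) Osum[OF O(1,3)] chsum[of y0] by linarith
    then have "S y0 \<ge> k + 1" using O(2,5) by (simp add: k_def)
    moreover have "S y0 = a * k + b - k^2" using Gab[OF y0V] by (simp add: k_def)
    moreover have "a * k + b - k^2 = k - b * (k - 1)"
    proof -
      have ha: "a = k + 1 - b" using hk by simp
      show ?thesis unfolding ha by (simp add: algebra_simps power2_eq_square)
    qed
    ultimately have "b * (k - 1) \<le> -1" by simp
    then show ?thesis using k2 by (smt (verit) mult_nonneg_nonneg)
  qed
  have claimA: "\<And>x. x \<in> V - W \<Longrightarrow> ch x = {}"
  proof (rule ccontr)
    fix x0 assume x0: "x0 \<in> V - W" "ch x0 \<noteq> {}"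
    obtain y where y: "y \<in> V - W \<and> ch y \<noteq> {}" and ymin: "\<And>z. z \<in> V - W \<and> ch z \<noteq> {} \<Longrightarrow> rk y \<le> rk z"
      using ex_has_least_nat[of "\<lambda>x. x \<in> V - W \<and> ch x \<noteq> {}" x0 rk] x0 by blast
    have chleaf: "\<And>c. c \<in> ch y \<Longrightarrow> ch c = {}"
    proof (rule ccontr)
      fix c assume c: "c \<in> ch y" "ch c \<noteq> {}"
      then have cV: "c \<in> V - W" "par c = y" by (auto simp: ch_def)
      then have "rk c < rk y" using Prk y by force
      moreover have "rk y \<le> rk c" using ymin cV c by blast
      ultimately show False by simp
    qed
    obtain c where c: "c \<in> ch y" using y by blast
    have cV: "c \<in> V - W" "par c = y" using c by (auto simp: ch_def)
    have dy: "int (dg y) = k" using leaf[OF cV(1) chleaf[OF c]] cV hk by simp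
    have chy1: "\<And>c. c \<in> ch y \<Longrightarrow> dg c = 1" using chleaf dgV ch_sub by force
    have Sy1: "(\<Sum>c\<in>ch y. int (dg c)) = int (card (ch y))" using chy1 by simp
    have yV: "y \<in> V - W" using y by blast
    define z where "z = par y"
    have zV: "z \<in> V" using Pv[OF yV] by (simp add: z_def)
    have yz: "y \<in> ch z" using inch[OF yV] by (simp add: z_def)
    have Sy: "S y = int (dg z) + (k - 1)" using SV[OF yV] Sy1 dgV[OF yV] dy by (simp add: z_def)
    have hZ: "int (dg z) + (k - 1) = a * k + b - k^2" using Sy Gab[of y] yV dy by simp
    obtain Ou where O: "finite Ou" "card Ou \<ge> 1" "\<forall>q\<in>Ou. dg q \<ge> 2"
      "S z = (\<Sum>y\<in>Ou. int (dg y)) + (\<Sum>y\<in>ch z. int (dg y))" "dg z = card Ou + card (ch z)"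
      using outer[OF zV] by blast
    have "(\<Sum>y\<in>ch z. int (dg y)) = int (dg y) + (\<Sum>y\<in>ch z - {y}. int (dg y))"
      using yz fin_ch by (simp add: sum.remove)
    moreover have "(\<Sum>y\<in>ch z - {y}. int (dg y)) \<ge> int (card (ch z - {y}))"
    proof -
      have "(\<Sum>y\<in>ch z - {y}. int (dg y)) \<ge> (\<Sum>y\<in>ch z - {y}. 1)"
        using dg1 ch_sub by (intro sum_mono) force
      then show ?thesis by simp
    qed
    moreover have "int (card (ch z - {y})) = int (card (ch z)) - 1"
    proof -
      have "card (ch z) > 0" using yz fin_ch[of z] by (auto simp: card_gt_0_iff)
      then show ?thesis using yz fin_ch[of z] by (simp add: card_Diff_singleton of_nat_diff)
    qed
    ultimately have "(\<Sum>y\<in>ch z. int (dg y)) \<ge> k + int (card (ch z)) - 1" using dy by linarith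
    then have Sz: "S z \<ge> 2 * int (card Ou) + k + int (card (ch z)) - 1" using O(4) Osum[OF O(1,3)] by linarith
    have "S z = a * int (dg z) + b - int (dg z)^2" using Gab[OF zV] .
    also have "\<dots> \<le> int (dg z) + k - 1" using alg1[OF hk[symmetric] bneg k2 hZ] .
    finally show False using Sz O(2,5) by linarith
  qed
  have chW1: "\<And>w c. c \<in> ch w \<Longrightarrow> dg c = 1"
  proof -
    fix w c assume "c \<in> ch w"
    then have "c \<in> V - W" using ch_sub by blast
    then show "dg c = 1" using claimA dgV by simp
  qed
  have chWsum: "\<And>w. (\<Sum>y\<in>ch w. int (dg y)) = int (card (ch w))" using chW1 by simp
  have chk: "\<And>w. ch w \<noteq> {} \<Longrightarrow> int (dg w) = k"
  proof -
    fix w assume "ch w \<noteq> {}"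
    then obtain c where c: "c \<in> ch w" by blast
    then have "c \<in> V - W" "par c = w" by (auto simp: ch_def)
    then show "int (dg w) = k" using leaf claimA hk by force
  qed
  have RW: "\<And>w. w \<in> W \<Longrightarrow> (\<Sum>y\<in>NW w. int (dg y)) = a * int (dg w) + b - int (dg w)^2 - int (dg w) + int (card (NW w))"
  proof -
    fix w assume w: "w \<in> W"
    have "S w = a * int (dg w) + b - int (dg w)^2" using Gab w WV by blast
    moreover have "S w = (\<Sum>y\<in>NW w. int (dg y)) + int (card (ch w))" using SW[OF w] chWsum by simp
    moreover have "int (dg w) = int (card (NW w)) + int (card (ch w))" using dgW[OF w] by simp
    ultimately show "?thesis w" by linarith
  qed
  have y0W: "y0 \<in> W"
  proof (rule ccontr)
    assume "y0 \<notin> W"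
    then have "y0 \<in> V - W" using y0V by simp
    then have "ch y0 = {}" using claimA by simp
    moreover have "p0 \<in> ch y0" using inch[OF p0W] by (simp add: y0_def)
    ultimately show False by simp
  qed
  have k3: "k \<ge> 3"
  proof -
    have "card (ch y0) > 0" using inch[OF p0W] fin_ch[of y0] by (auto simp: y0_def card_gt_0_iff)
    then show ?thesis using dgW[OF y0W] NW2[OF y0W] by (simp add: k_def)
  qed
  have nonu: "\<And>w. w \<in> W \<Longrightarrow> w \<noteq> u \<Longrightarrow> int (dg w) = 2 \<or> int (dg w) = k"
  proof -
    fix w assume w: "w \<in> W" "w \<noteq> u"
    show "int (dg w) = 2 \<or> int (dg w) = k"
    proof (cases "ch w = {}")
      case True then show ?thesis using dgW[OF w(1)] cardNW[OF w(1)] w(2) by simp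
    next
      case False then show ?thesis using chk by simp
    qed
  qed
  define U where "U = int (dg u)"
  have Uc: "U = 6 \<or> (U = k \<and> k \<ge> 7)"
  proof (cases "ch u = {}")
    case True then show ?thesis using dgW[OF uW] cardNW[OF uW] by (simp add: U_def)
  next
    case False
    then have "card (ch u) > 0" using fin_ch[of u] by (auto simp: card_gt_0_iff)
    then show ?thesis using chk[OF False] dgW[OF uW] cardNW[OF uW] by (simp add: U_def)
  qed
  define N where "N = NW u"
  have cN: "card N = 6" using cardNW[OF uW] by (simp add: N_def)
  have finN: "finite N" using fin_NW by (simp add: N_def)
  have uN: "\<And>v. v \<in> N \<Longrightarrow> v \<in> W \<and> v \<noteq> u" using irr NW_sub by (auto simp: N_def NW_def)
  have Nvals: "\<forall>v\<in>N. int (dg v) = 2 \<or> int (dg v) = k" using uN nonu by blast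
  have loc: "\<And>v. v \<in> N \<Longrightarrow> \<exists>d. (d = 2 \<or> d = k) \<and> U + d = a * int (dg v) + b - int (dg v)^2 - int (dg v) + 2"
  proof -
    fix v assume v: "v \<in> N"
    have vW: "v \<in> W" "v \<noteq> u" using uN[OF v] by auto
    have uv: "u \<in> NW v" using NWsym[of v u] v uW by (simp add: N_def)
    have c2: "card (NW v) = 2" using cardNW[OF vW(1)] vW(2) by simp
    then obtain x y where xy: "NW v = {x, y}" "x \<noteq> y" by (auto simp: card_2_iff)
    obtain w where w: "NW v = {u, w}" "w \<noteq> u"
      using xy uv by (cases "x = u") (auto simp: insert_commute)
    have wW: "w \<in> W" using w NW_sub by blast
    have "(\<Sum>y\<in>NW v. int (dg y)) = U + int (dg w)" using w by (simp add: U_def)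
    then have "U + int (dg w) = a * int (dg v) + b - int (dg v)^2 - int (dg v) + 2" using RW[OF vW(1)] c2 by simp
    moreover have "int (dg w) = 2 \<or> int (dg w) = k" using nonu[OF wW w(2)] .
    ultimately show "?thesis v" by blast
  qed
  define A where "A = int (card {v\<in>N. int (dg v) = 2})"
  have cardsplit: "card {v\<in>N. int (dg v) = 2} + card {v\<in>N. int (dg v) \<noteq> 2} = 6"
    using card_split2[OF finN, of "\<lambda>v. int (dg v) = 2"] cN by simp
  have A6: "0 \<le> A" "A \<le> 6" using cardsplit by (auto simp: A_def)
  have usum0: "(\<Sum>v\<in>N. int (dg v)) = 2 * A + k * (6 - A)"
    using sum_split2[OF finN Nvals, of "\<lambda>x. x"] cardsplit by (simp add: A_def)
  have us: "2*A + k*(6-A) = a*U + b - U^2 - U + 6"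
    using usum0 RW[OF uW] cardNW[OF uW] by (simp add: N_def U_def)
  have h2: "A > 0 \<Longrightarrow> \<exists>d. (d = 2 \<or> d = k) \<and> U + d = a*2 + b - 4 - 2 + 2"
  proof -
    assume "A > 0"
    then have "card {v\<in>N. int (dg v) = 2} > 0" by (simp add: A_def)
    then have "{v\<in>N. int (dg v) = 2} \<noteq> {}" by (metis card.empty less_irrefl)
    then obtain v where "v \<in> N" "int (dg v) = 2" by blast
    then show ?thesis using loc[of v] by simp
  qed
  have hk': "A < 6 \<Longrightarrow> \<exists>d. (d = 2 \<or> d = k) \<and> U + d = a*k + b - k^2 - k + 2"
  proof -
    assume "A < 6"
    then have "card {v\<in>N. int (dg v) \<noteq> 2} > 0" using cardsplit by (simp add: A_def)
    then have "{v\<in>N. int (dg v) \<noteq> 2} \<noteq> {}" by (metis card.empty less_irrefl)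
    then obtain v where v: "v \<in> N" "int (dg v) \<noteq> 2" by blast
    then have "int (dg v) = k" using Nvals by blast
    then show ?thesis using loc[OF v(1)] by simp
  qed
  have finW: "finite W" using finV WV by (meson finite_subset)
  define F where "F = (\<lambda>w. a * int (dg w) + b - int (dg w)^2 - int (dg w) + int (card (NW w)) - int (card (NW w)) * int (dg w))"
  have glob0: "(\<Sum>w\<in>W. F w) = 0"
  proof -
    have "(\<Sum>w\<in>W. \<Sum>x\<in>NW w. int (dg x)) = (\<Sum>x\<in>W. int (card (NW x)) * int (dg x))"
      using dbl_count[OF finW sym, of "\<lambda>x. int (dg x)"] by (simp add: NW_def)
    moreover have "(\<Sum>w\<in>W. \<Sum>x\<in>NW w. int (dg x)) = (\<Sum>w\<in>W. a * int (dg w) + b - int (dg w)^2 - int (dg w) + int (card (NW w)))"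
      using RW by (intro sum.cong) auto
    ultimately show ?thesis by (simp add: F_def sum_subtractf)
  qed
  define n2 where "n2 = int (card {w\<in>W - {u}. int (dg w) = 2})"
  define nk where "nk = int (card {w\<in>W - {u}. int (dg w) \<noteq> 2})"
  have Wvals: "\<forall>w\<in>W - {u}. int (dg w) = 2 \<or> int (dg w) = k" using nonu by blast
  have "(\<Sum>w\<in>W. F w) = F u + (\<Sum>w\<in>W - {u}. F w)" using finW uW by (simp add: sum.remove)
  moreover have "(\<Sum>w\<in>W - {u}. F w) = (\<Sum>w\<in>W - {u}. (\<lambda>d. a * d + b - d^2 - d + 2 - 2 * d) (int (dg w)))"
    using cardNW by (intro sum.cong) (auto simp: F_def)
  moreover have "\<dots> = n2 * (a*2 + b - 4 - 2 + 2 - 2*2) + nk * (a*k + b - k^2 - k + 2 - 2*k)"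
    using sum_split2[OF _ Wvals, of "\<lambda>d. a * d + b - d^2 - d + 2 - 2 * d"] finW
    by (simp add: n2_def nk_def mult.commute)
  moreover have "F u = a*U + b - U^2 - U + 6 - 6*U" using cardNW[OF uW] by (simp add: F_def U_def)
  ultimately have gl: "n2*(a*2 + b - 4 - 2 + 2 - 2*2) + nk*(a*k + b - k^2 - k + 2 - 2*k) + (a*U + b - U^2 - U + 6 - 6*U) = 0"
    using glob0 by linarith
  show False
    using final_arith[OF hk[symmetric] bneg k3 Uc A6 us h2 hk' _ _ gl] by (simp add: n2_def nk_def)
qed

end
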